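(* Let $G$ be a connected graph that is not complete. Then $\dim_{n\ell}(G)=1$ if and only if there exists a vertex $x\in V(G)$ such that for every integer $k$ with $0\le k\le \mathrm{diam}(G)$ the distance level $L_k(x)=\{u\in V(G): d_G(x,u)=k\}$ induces a complete subgraph of $G$.
   Context: Graphs are finite, simple and connected; $d_G(u,v)$ is the shortest-path distance and $\mathrm{diam}(G)$ the largest distance in $G$. A set $X\subseteq V(G)$ resolves two vertices $u,v$ if some $x\in X$ satisfies $d_G(u,x)\neq d_G(v,x)$. $X$ is a resolving set if it resolves every pair of distinct vertices; the metric dimension $\dim(G)$ is the minimum size of a resolving set. $X$ is a nonlocal resolving set if it resolves every pair of distinct non-adjacent vertices; the nonlocal metric dimension $\dim_{n\ell}(G)$ is the minimum size of a nonlocal resolving set (so $\dim_{n\ell}(K_n)=0$), and a nonlocal metric basis is a nonlocal resolving set of this minimum size. *)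

theory Defs
  imports Main
begin

definition simple_graph :: "'a set \<Rightarrow> ('a \<Rightarrow> 'a \<Rightarrow> bool) \<Rightarrow> bool" where
  "simple_graph V E \<longleftrightarrow> finite V \<and> V \<noteq> {} \<and>
     (\<forall>u v. E u v \<longrightarrow> u \<in> V \<and> v \<in> V) \<and>
     (\<forall>u v. E u v \<longrightarrow> E v u) \<and> (\<forall>u. \<not> E u u)"

definition is_walk :: "'a set \<Rightarrow> ('a \<Rightarrow> 'a \<Rightarrow> bool) \<Rightarrow> 'a list \<Rightarrow> bool" where
  "is_walk V E p \<longleftrightarrow> p \<noteq> [] \<and> set p \<subseteq> V \<and>
     (\<forall>i. Suc i < length p \<longrightarrow> E (p ! i) (p ! Suc i))"

definition walk_betw :: "'a set \<Rightarrow> ('a \<Rightarrow> 'a \<Rightarrow> bool) \<Rightarrow> 'a \<Rightarrow> nat \<Rightarrow> 'a \<Rightarrow> bool" where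
  "walk_betw V E u n v \<longleftrightarrow>
     (\<exists>p. is_walk V E p \<and> hd p = u \<and> last p = v \<and> length p = Suc n)"

definition connected_graph :: "'a set \<Rightarrow> ('a \<Rightarrow> 'a \<Rightarrow> bool) \<Rightarrow> bool" where
  "connected_graph V E \<longleftrightarrow> (\<forall>u\<in>V. \<forall>v\<in>V. \<exists>n. walk_betw V E u n v)"

text \<open>Shortest-path distance (meaningful in connected graphs).\<close>

definition dist :: "'a set \<Rightarrow> ('a \<Rightarrow> 'a \<Rightarrow> bool) \<Rightarrow> 'a \<Rightarrow> 'a \<Rightarrow> nat" where
  "dist V E u v = (LEAST n. walk_betw V E u n v)"

definition diam :: "'a set \<Rightarrow> ('a \<Rightarrow> 'a \<Rightarrow> bool) \<Rightarrow> nat" where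
  "diam V E = Max {dist V E u v | u v. u \<in> V \<and> v \<in> V}"

definition complete_graph :: "'a set \<Rightarrow> ('a \<Rightarrow> 'a \<Rightarrow> bool) \<Rightarrow> bool" where
  "complete_graph V E \<longleftrightarrow> (\<forall>u\<in>V. \<forall>v\<in>V. u \<noteq> v \<longrightarrow> E u v)"

definition resolves :: "'a set \<Rightarrow> ('a \<Rightarrow> 'a \<Rightarrow> bool) \<Rightarrow> 'a set \<Rightarrow> 'a \<Rightarrow> 'a \<Rightarrow> bool" where
  "resolves V E X u v \<longleftrightarrow> (\<exists>x\<in>X. dist V E u x \<noteq> dist V E v x)"

definition nonlocal_resolving_set :: "'a set \<Rightarrow> ('a \<Rightarrow> 'a \<Rightarrow> bool) \<Rightarrow> 'a set \<Rightarrow> bool" where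
  "nonlocal_resolving_set V E X \<longleftrightarrow> X \<subseteq> V \<and>
     (\<forall>u\<in>V. \<forall>v\<in>V. u \<noteq> v \<and> \<not> E u v \<longrightarrow> resolves V E X u v)"

definition nonlocal_metric_dim :: "'a set \<Rightarrow> ('a \<Rightarrow> 'a \<Rightarrow> bool) \<Rightarrow> nat" where
  "nonlocal_metric_dim V E = (LEAST k. \<exists>X. nonlocal_resolving_set V E X \<and> card X = k)"

definition level :: "'a set \<Rightarrow> ('a \<Rightarrow> 'a \<Rightarrow> bool) \<Rightarrow> 'a \<Rightarrow> nat \<Rightarrow> 'a set" where
  "level V E x k = {u \<in> V. dist V E x u = k}"

definition induces_complete :: "('a \<Rightarrow> 'a \<Rightarrow> bool) \<Rightarrow> 'a set \<Rightarrow> bool" where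
  "induces_complete E S \<longleftrightarrow> (\<forall>u\<in>S. \<forall>v\<in>S. u \<noteq> v \<longrightarrow> E u v)"

end

theory Submission
  imports Defs
begin

lemma walk_rev:
  assumes "simple_graph V E" "is_walk V E p"
  shows "is_walk V E (rev p)"
proof -
  have sym: "\<And>u v. E u v \<Longrightarrow> E v u" using assms(1) by (simp add: simple_graph_def)
  have "E (rev p ! i) (rev p ! Suc i)" if "Suc i < length p" for i
  proof -
    define j where "j = length p - Suc (Suc i)"
    have j: "Suc j < length p" "Suc j = length p - Suc i" using that by (auto simp: j_def)
    have "E (p ! j) (p ! Suc j)" using assms(2) j(1) unfolding is_walk_def by blast
    moreover have "rev p ! i = p ! Suc j" using that j by (simp add: rev_nth)
    moreover have "rev p ! Suc i = p ! j" using that by (simp add: rev_nth j_def)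
    ultimately show ?thesis using sym by simp
  qed
  then show ?thesis using assms(2) by (auto simp: is_walk_def)
qed

lemma walk_betw_sym:
  assumes "simple_graph V E"
  shows "walk_betw V E u n v = walk_betw V E v n u"
proof -
  have *: "walk_betw V E v n u" if w: "walk_betw V E u n v" for u v
  proof -
    obtain p where p: "is_walk V E p" "hd p = u" "last p = v" "length p = Suc n"
      using w unfolding walk_betw_def by blast
    have "p \<noteq> []" using p by (simp add: is_walk_def)
    then show ?thesis unfolding walk_betw_def using p walk_rev[OF assms p(1)]
      by (intro exI[of _ "rev p"]) (auto simp: hd_rev last_rev)
  qed
  show ?thesis using * by blast
qed

lemma dist_sym:
  assumes "simple_graph V E"
  shows "dist V E u v = dist V E v u"
  unfolding dist_def using walk_betw_sym[OF assms] by simp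

lemma dist_zero:
  assumes "connected_graph V E" "u \<in> V" "v \<in> V" "dist V E u v = 0"
  shows "u = v"
proof -
  obtain n where "walk_betw V E u n v" using assms by (auto simp: connected_graph_def)
  then have "walk_betw V E u (dist V E u v) v" unfolding dist_def by (rule LeastI)
  then obtain p where p: "hd p = u" "last p = v" "length p = 1"
    using assms(4) by (auto simp: walk_betw_def)
  then obtain a where "p = [a]" by (cases p) auto
  then show ?thesis using p by simp
qed

lemma dist_le_diam:
  assumes "simple_graph V E" "u \<in> V" "v \<in> V"
  shows "dist V E u v \<le> diam V E"
proof -
  have "{dist V E u v | u v. u \<in> V \<and> v \<in> V} = (\<lambda>(u,v). dist V E u v) ` (V \<times> V)" by auto
  then have "finite {dist V E u v | u v. u \<in> V \<and> v \<in> V}"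
    using assms(1) by (simp add: simple_graph_def)
  then show ?thesis unfolding diam_def using assms by (intro Max_ge) auto
qed

theorem proposition2p1:
  fixes V :: "'a set" and E :: "'a \<Rightarrow> 'a \<Rightarrow> bool"
  assumes "simple_graph V E" and "connected_graph V E" and "\<not> complete_graph V E"
  shows "nonlocal_metric_dim V E = 1 \<longleftrightarrow>
         (\<exists>x\<in>V. \<forall>k::nat. k \<le> diam V E \<longrightarrow> induces_complete E (level V E x k))"
proof -
  let ?P = "\<lambda>k. \<exists>X. nonlocal_resolving_set V E X \<and> card X = k"
  have fin: "finite V" using assms(1) by (simp add: simple_graph_def)
  have notP0: "\<not> ?P 0"
  proof
    assume "?P 0"
    then obtain X where X: "nonlocal_resolving_set V E X" "card X = 0" by blast
    then have "X = {}" using fin by (auto simp: nonlocal_resolving_set_def dest: finite_subset)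
    moreover obtain u v where "u \<in> V" "v \<in> V" "u \<noteq> v" "\<not> E u v"
      using assms(3) by (auto simp: complete_graph_def)
    ultimately show False using X by (auto simp: nonlocal_resolving_set_def resolves_def)
  qed
  have PV: "?P (card V)"
  proof -
    have "nonlocal_resolving_set V E V"
      unfolding nonlocal_resolving_set_def resolves_def
    proof (intro conjI ballI impI)
      fix u v assume uv: "u \<in> V" "v \<in> V" "u \<noteq> v \<and> \<not> E u v"
      have "dist V E v u \<noteq> 0" using dist_zero[OF assms(2) uv(2) uv(1)] uv(3) by auto
      moreover have "dist V E u u = 0" unfolding dist_def
        using uv(1) by (intro Least_eq_0) (auto simp: walk_betw_def is_walk_def intro!: exI[of _ "[u]"])
      ultimately show "\<exists>x\<in>V. dist V E u x \<noteq> dist V E v x" using uv by metis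
    qed simp
    then show ?thesis by blast
  qed
  have iff1: "nonlocal_metric_dim V E = 1 \<longleftrightarrow> (\<exists>x\<in>V. nonlocal_resolving_set V E {x})"
  proof
    assume h: "nonlocal_metric_dim V E = 1"
    have "?P (nonlocal_metric_dim V E)" unfolding nonlocal_metric_dim_def
      using PV by (rule LeastI)
    then obtain X where "nonlocal_resolving_set V E X" "card X = 1" using h by auto
    then show "\<exists>x\<in>V. nonlocal_resolving_set V E {x}"
      by (auto simp: card_1_singleton_iff nonlocal_resolving_set_def)
  next
    assume "\<exists>x\<in>V. nonlocal_resolving_set V E {x}"
    then have "?P 1" by force
    then show "nonlocal_metric_dim V E = 1" unfolding nonlocal_metric_dim_def
      using notP0 by (intro Least_equality) (auto simp: less_Suc_eq_le[symmetric] less_one)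
  qed
  have iff2: "nonlocal_resolving_set V E {x} \<longleftrightarrow>
      (\<forall>k::nat. k \<le> diam V E \<longrightarrow> induces_complete E (level V E x k))" if x: "x \<in> V" for x
  proof
    assume h: "nonlocal_resolving_set V E {x}"
    show "\<forall>k::nat. k \<le> diam V E \<longrightarrow> induces_complete E (level V E x k)"
    proof (intro allI impI)
      fix k show "induces_complete E (level V E x k)"
        unfolding induces_complete_def level_def
      proof (intro ballI impI)
        fix u v assume u: "u \<in> {u \<in> V. dist V E x u = k}" and v: "v \<in> {u \<in> V. dist V E x u = k}"
          and "u \<noteq> v"
        then show "E u v" using h dist_sym[OF assms(1)]
          unfolding nonlocal_resolving_set_def resolves_def by fastforce
      qed
    qed
  next
    assume h: "\<forall>k::nat. k \<le> diam V E \<longrightarrow> induces_complete E (level V E x k)"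
    show "nonlocal_resolving_set V E {x}"
      unfolding nonlocal_resolving_set_def resolves_def
    proof (intro conjI ballI impI)
      fix u v assume uv: "u \<in> V" "v \<in> V" "u \<noteq> v \<and> \<not> E u v"
      show "\<exists>y\<in>{x}. dist V E u y \<noteq> dist V E v y"
      proof (rule ccontr)
        assume "\<not> ?thesis"
        then have eq: "dist V E x u = dist V E x v" using dist_sym[OF assms(1)] by auto
        have "dist V E x u \<le> diam V E" using dist_le_diam[OF assms(1) x uv(1)] .
        then have "induces_complete E (level V E x (dist V E x u))" using h by blast
        then show False using uv eq by (auto simp: induces_complete_def level_def)
      qed
    qed (use x in simp)
  qed
  show ?thesis using iff1 iff2 by auto
qed

end
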